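(* Let $k\in\{3,4,5,6\}$ and let $\widehat p_0,\dots,\widehat p_4$ be a normalized configuration of 5 distinct points on $S^2$ minimizing $\sum_{i<j}(4-\|\widehat p_i-\widehat p_j\|^2)^k$ among all 5-point configurations on $S^2$. Let $p_i=\Sigma(\widehat p_i)\in\mathbb{R}^2$ for $i=0,1,2,3$. Then $|p_0|<4$ and $|p_i|<3/2$ for $i=1,2,3$.
   Context: $\Sigma(x,y,z)=(x/(1-z),y/(1-z))$ is stereographic projection from $(0,0,1)$. A configuration $\widehat p_0,\dots,\widehat p_4$ is normalized if $\widehat p_4=(0,0,1)$ and $\|\widehat p_4-\widehat p_0\|\le\|\widehat p_4-\widehat p_i\|$ for $i=1,2,3$. *)

theory Defs
  imports "HOL-Analysis.Analysis"
begin

text \<open>Points of R^3 are modelled as real^3; coordinates x,y,z are components 1,2,3.\<close>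

definition S2 :: "(real^3) set" where
  "S2 = {p. norm p = 1}"

definition stereo :: "real^3 \<Rightarrow> real^2" where
  "stereo p = vector [p$1 / (1 - p$3), p$2 / (1 - p$3)]"

definition north :: "real^3" where
  "north = vector [0, 0, 1]"

definition config5 :: "(nat \<Rightarrow> real^3) \<Rightarrow> bool" where
  "config5 P \<longleftrightarrow> inj_on P {..<5} \<and> (\<forall>i<5. P i \<in> S2)"

definition energy :: "nat \<Rightarrow> (nat \<Rightarrow> real^3) \<Rightarrow> real" where
  "energy k P = (\<Sum>j<5. \<Sum>i<j. (4 - (norm (P i - P j))^2) ^ k)"

definition normalized :: "(nat \<Rightarrow> real^3) \<Rightarrow> bool" where
  "normalized P \<longleftrightarrow> P 4 = north \<and>
     (\<forall>i\<in>{1,2,3}. norm (P 4 - P 0) \<le> norm (P 4 - P i))"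

end

theory Submission
  imports Defs
begin


lemma n2v3: "(norm (p::real^3))^2 = p$1^2+p$2^2+p$3^2"
  unfolding power2_norm_eq_inner by (simp add: power2_norm_eq_inner inner_vec_def sum_3 power2_eq_square)

lemma n2v2: "(norm (p::real^2))^2 = p$1^2+p$2^2"
  unfolding power2_norm_eq_inner by (simp add: power2_norm_eq_inner inner_vec_def sum_2 power2_eq_square)

lemma inner_north: "inner p north = p$3"
  by (simp add: north_def inner_vec_def sum_3)

lemma nd: "norm (a::real^3) = 1 \<Longrightarrow> norm b = 1 \<Longrightarrow> (norm (a-b))^2 = 2 - 2*inner a b"
proof -
  assume "norm a = 1" "norm b = 1"
  then have "inner a a = 1" "inner b b = 1" by (metis power2_norm_eq_inner one_power2)+
  then show ?thesis unfolding power2_norm_eq_inner by (simp add: inner_diff inner_commute)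
qed

lemma stereo_bound:
  fixes p :: "real^3" and c z0 :: real
  assumes "norm p = 1" "p$3 < z0" "z0 < 1" "c > 0" "(1+z0)/(1-z0) \<le> c^2"
  shows "norm (stereo p) < c"
proof -
  have s: "p$1^2+p$2^2+p$3^2 = 1" using assms(1) n2v3[of p] by simp
  have h1: "1 - p$3 > 0" using assms by linarith
  have "(norm (stereo p))^2 = (p$1^2+p$2^2)/(1-p$3)^2"
    by (simp add: n2v2 stereo_def power_divide add_divide_distrib)
  also have "\<dots> = (1+p$3)/(1-p$3)"
  proof -
    have "p$1^2+p$2^2 = (1-p$3)*(1+p$3)" using s by (simp add: algebra_simps power2_eq_square)
    then show ?thesis using h1 by (simp add: power2_eq_square)
  qed
  also have "\<dots> < (1+z0)/(1-z0)"
  proof -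
    have a: "(1+p$3)/(1-p$3) = 2/(1-p$3) - 1" using h1 by (simp add: field_simps)
    have b: "(1+z0)/(1-z0) = 2/(1-z0) - 1" using assms(3) by (simp add: field_simps)
    have "2/(1-p$3) < 2/(1-z0)" using assms h1 by (intro divide_strict_left_mono) auto
    then show ?thesis using a b by linarith
  qed
  finally have "(norm (stereo p))^2 < (1+z0)/(1-z0)" .
  then have "(norm (stereo p))^2 < c^2" using assms(5) by (rule less_le_trans)
  then show ?thesis by (rule power_less_imp_less_base) (use assms(4) in simp)
qed


lemma energy_expand: "energy k P =
  (4 - (norm (P 0 - P 1))^2)^k + (4 - (norm (P 0 - P 2))^2)^k + (4 - (norm (P 1 - P 2))^2)^k
  + (4 - (norm (P 0 - P 3))^2)^k + (4 - (norm (P 1 - P 3))^2)^k + (4 - (norm (P 2 - P 3))^2)^k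
  + (4 - (norm (P 0 - P 4))^2)^k + (4 - (norm (P 1 - P 4))^2)^k + (4 - (norm (P 2 - P 4))^2)^k
  + (4 - (norm (P 3 - P 4))^2)^k"
  by (simp add: energy_def eval_nat_numeral algebra_simps)

definition bip :: "nat \<Rightarrow> real^3" where
 "bip i = (if i=0 then vector[0,0,1] else if i=1 then vector[0,0,-1] else if i = 2 then vector[1,0,0]
   else if i=3 then vector[-1/2, sqrt 3/2, 0] else vector[-1/2, -sqrt 3/2, 0])"

lemma bipd: "i < 5 \<Longrightarrow> j < 5 \<Longrightarrow> i < j \<Longrightarrow> (norm (bip i - bip j))^2 =
   (if i = 0 \<and> j = 1 then 4 else if i \<le> 1 then 2 else 3)"
  unfolding n2v3
  by (auto simp: bip_def eval_nat_numeral less_Suc_eq power2_eq_square algebra_simps)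

lemma bip_energy: "k > 0 \<Longrightarrow> energy k bip = 6 * 2^k + 3"
  unfolding energy_expand by (simp add: bipd)

lemma bip_config: "config5 bip"
  unfolding config5_def S2_def
proof
  show "inj_on bip {..<5}"
  proof (rule inj_onI)
    fix i j assume "i \<in> {..<5}" "j \<in> {..<5}" "bip i = bip j"
    then show "i = j"
      apply (auto simp: bip_def eval_nat_numeral less_Suc_eq vec_eq_iff forall_3 split: if_splits)
      done
  qed
  show "\<forall>i<5. bip i \<in> {p. norm p = 1}"
  proof (intro allI impI)
    fix i :: nat assume "i < 5"
    then have "(norm (bip i))^2 = 1" unfolding n2v3
      by (auto simp: bip_def eval_nat_numeral less_Suc_eq power2_eq_square)
    then show "bip i \<in> {p. norm p = 1}" using norm_ge_zero[of "bip i"] by (auto simp: power2_eq_1_iff)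
  qed
qed


lemma cube_tan: "(r::real) \<ge> 0 \<Longrightarrow> r^3 \<ge> 27/25 * r - 54/125"
proof -
  assume "r \<ge> 0"
  have "r^3 - (27/25 * r - 54/125) = (r - 3/5)^2 * (r + 6/5)" by (simp add: field_simps power2_eq_square power3_eq_cube)
  moreover have "(r - 3/5)^2 * (r + 6/5) \<ge> 0" using \<open>r \<ge> 0\<close> by simp
  ultimately show ?thesis by linarith
qed

lemma cube_big: "(x::real) \<ge> 18/13 \<Longrightarrow> x^3 - 27/25*x \<ge> (18/13)^3 - 27/25*(18/13)"
proof -
  assume h: "x \<ge> 18/13"
  have "x^3 - 27/25*x - ((18/13)^3 - 27/25*(18/13)) = (x - 18/13) * (x^2 + 18/13*x + (18/13)^2 - 27/25)"
    by (simp add: field_simps power2_eq_square power3_eq_cube)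
  moreover have "x^2 + 18/13*x + (18/13)^2 - 27/25 \<ge> 0"
  proof -
    have "x^2 \<ge> 0" by simp
    then show ?thesis using h by (simp add: power2_eq_square)
  qed
  ultimately show ?thesis using h by (smt (verit) mult_nonneg_nonneg)
qed

lemma L3:
  fixes x y r1 r2 r3 r4 r5 r6 r7 r8 :: real
  assumes "x \<ge> 18/13" "y \<ge> 18/13" "r1 \<ge> 0" "r2 \<ge> 0" "r3 \<ge> 0" "r4 \<ge> 0" "r5 \<ge> 0" "r6 \<ge> 0" "r7 \<ge> 0" "r8 \<ge> 0"
    "x+y+r1+r2+r3+r4+r5+r6+r7+r8 \<ge> 15/2"
  shows "(2*x)^3+(2*y)^3+(2*r1)^3+(2*r2)^3+(2*r3)^3+(2*r4)^3+(2*r5)^3+(2*r6)^3+(2*r7)^3+(2*r8)^3 > 51"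
proof -
  note c = cube_tan[OF assms(3)] cube_tan[OF assms(4)] cube_tan[OF assms(5)] cube_tan[OF assms(6)]
     cube_tan[OF assms(7)] cube_tan[OF assms(8)] cube_tan[OF assms(9)] cube_tan[OF assms(10)]
     cube_big[OF assms(1)] cube_big[OF assms(2)]
  have "x^3+y^3+r1^3+r2^3+r3^3+r4^3+r5^3+r6^3+r7^3+r8^3 > 51/8"
    using c assms(11) by (simp add: power3_eq_cube)
  then show ?thesis by (simp add: power_mult_distrib)
qed

lemma L1: "k \<in> {3,4,5,6::nat} \<Longrightarrow> (64/17::real)^k > 6*2^k+3"
  by (auto simp: eval_nat_numeral)

lemma L2: "k \<in> {4,5,6::nat} \<Longrightarrow> 2*(36/13::real)^k > 6*2^k+3"
  by (auto simp: eval_nat_numeral)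

lemma sum_ident:
  fixes a b c d e :: "real^3"
  assumes "norm a = 1" "norm b = 1" "norm c = 1" "norm d = 1" "norm e = 1"
  shows "inner a b + inner a c + inner b c + inner a d + inner b d + inner c d + inner a e + inner b e + inner c e + inner d e \<ge> -5/2"
proof -
  have u: "inner a a = 1" "inner b b = 1" "inner c c = 1" "inner d d = 1" "inner e e = 1"
    using assms by (metis power2_norm_eq_inner one_power2)+
  have "0 \<le> inner (a+b+c+d+e) (a+b+c+d+e)" by simp
  also have "\<dots> = 5 + 2*(inner a b + inner a c + inner b c + inner a d + inner b d + inner c d + inner a e + inner b e + inner c e + inner d e)"
    by (simp add: inner_add_left inner_add_right inner_commute u)
  finally have "0 \<le> 5 + 2*(inner a b + inner a c + inner b c + inner a d + inner b d + inner c d + inner a e + inner b e + inner c e + inner d e)" .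
  moreover have "\<And>S::real. 0 \<le> 5 + 2*S \<Longrightarrow> -5/2 \<le> S" by linarith
  ultimately show ?thesis by blast
qed


theorem lemma2p2:
  fixes k :: nat and P :: "nat \<Rightarrow> real^3"
  assumes "k \<in> {3,4,5,6}"
    and "config5 P"
    and "normalized P"
    and "\<And>Q. config5 Q \<Longrightarrow> energy k P \<le> energy k Q"
  shows "norm (stereo (P 0)) < 4 \<and> (\<forall>i\<in>{1,2,3}. norm (stereo (P i)) < 3/2)"
proof -
  have un: "\<And>i. i<5 \<Longrightarrow> norm (P i) = 1" using assms(2) by (auto simp: config5_def S2_def)
  have P4: "P 4 = north" using assms(3) by (simp add: normalized_def)
  have k0: "k > 0" using assms(1) by auto
  have Eb: "energy k P \<le> 6*2^k+3" using assms(4)[OF bip_config] bip_energy[OF k0] by simp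
  define t where "t i j = inner (P i) (P j)" for i j
  have trm: "4 - (norm (P i - P j))^2 = 2*(1 + t i j)" if "i<5" "j<5" for i j
    using nd[OF un[OF that(1)] un[OF that(2)]] by (simp add: t_def)
  have tge: "1 + t i j \<ge> 0" if "i<5" "j<5" for i j
  proof -
    have "\<bar>t i j\<bar> \<le> norm (P i) * norm (P j)" unfolding t_def by (rule Cauchy_Schwarz_ineq2)
    then show ?thesis using un[OF that(1)] un[OF that(2)] by simp
  qed
  have Eexp: "energy k P = (2*(1+t 0 1))^k + (2*(1+t 0 2))^k + (2*(1+t 1 2))^k
     + (2*(1+t 0 3))^k + (2*(1+t 1 3))^k + (2*(1+t 2 3))^k
     + (2*(1+t 0 4))^k + (2*(1+t 1 4))^k + (2*(1+t 2 4))^k + (2*(1+t 3 4))^k"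
    unfolding energy_expand by (simp add: trm)
  have nn: "(2*(1+t 0 1))^k \<ge> 0" "(2*(1+t 0 2))^k \<ge> 0" "(2*(1+t 1 2))^k \<ge> 0"
     "(2*(1+t 0 3))^k \<ge> 0" "(2*(1+t 1 3))^k \<ge> 0" "(2*(1+t 2 3))^k \<ge> 0"
     "(2*(1+t 0 4))^k \<ge> 0" "(2*(1+t 1 4))^k \<ge> 0" "(2*(1+t 2 4))^k \<ge> 0" "(2*(1+t 3 4))^k \<ge> 0"
    by (rule zero_le_power mult_nonneg_nonneg tge | simp)+
  have z: "t i 4 = P i $ 3" for i unfolding t_def P4 by (simp add: inner_north)
  have zle: "P i $ 3 \<le> P 0 $ 3" if i: "i \<in> {1,2,3}" for i
  proof -
    have il: "i < 5" using i by auto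
    have "norm (P 4 - P 0) \<le> norm (P 4 - P i)" using assms(3) i unfolding normalized_def by auto
    then have "(norm (P 4 - P 0))^2 \<le> (norm (P 4 - P i))^2" by (simp add: power_mono)
    then show ?thesis using nd[OF un[of 4] un[of 0]] nd[OF un[of 4] un[OF il]] z[of 0] z[of i]
      by (simp add: t_def inner_commute)
  qed
  have A: "P 0 $ 3 < 15/17"
  proof (rule ccontr)
    assume "\<not> P 0 $ 3 < 15/17"
    then have "2*(1+t 0 4) \<ge> 64/17" using z[of 0] by simp
    then have "(2*(1+t 0 4))^k \<ge> (64/17)^k" by (intro power_mono) auto
    then have "energy k P \<ge> (64/17)^k" using Eexp nn by linarith
    then show False using Eb L1[OF assms(1)] by linarith
  qed
  have B: "P i $ 3 < 5/13" if i: "i \<in> {1,2,3}" for i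
  proof (rule ccontr)
    assume "\<not> P i $ 3 < 5/13"
    then have hi: "P i $ 3 \<ge> 5/13" by simp
    then have h0: "P 0 $ 3 \<ge> 5/13" using zle[OF i] by simp
    have X: "1+t 0 4 \<ge> 18/13" using h0 z[of 0] by simp
    have Y: "1+t i 4 \<ge> 18/13" using hi z[of i] by simp
    show False
    proof (cases "k = 3")
      case True
      have S: "t 0 1 + t 0 2 + t 1 2 + t 0 3 + t 1 3 + t 2 3 + t 0 4 + t 1 4 + t 2 4 + t 3 4 \<ge> -5/2"
        unfolding t_def by (rule sum_ident) (simp_all add: un)
      note E3 = Eexp[unfolded True]
      have "energy 3 P > 51"
        using i
      proof (elim insertE emptyE)
        assume "i = 1"
        then have Y1: "1+t 1 4 \<ge> 18/13" using Y by simp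
        have "51 < (2*(1+t 0 4))^3 + (2*(1+t 1 4))^3 + (2*(1+t 0 1))^3 + (2*(1+t 0 2))^3 + (2*(1+t 1 2))^3 + (2*(1+t 0 3))^3 + (2*(1+t 1 3))^3 + (2*(1+t 2 3))^3 + (2*(1+t 2 4))^3 + (2*(1+t 3 4))^3"
          using S by (intro L3[OF X Y1]) (simp_all add: tge)
        then show ?thesis using E3 by linarith
      next
        assume "i = 2"
        then have Y1: "1+t 2 4 \<ge> 18/13" using Y by simp
        have "51 < (2*(1+t 0 4))^3 + (2*(1+t 2 4))^3 + (2*(1+t 0 1))^3 + (2*(1+t 0 2))^3 + (2*(1+t 1 2))^3 + (2*(1+t 0 3))^3 + (2*(1+t 1 3))^3 + (2*(1+t 2 3))^3 + (2*(1+t 1 4))^3 + (2*(1+t 3 4))^3"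
          using S by (intro L3[OF X Y1]) (simp_all add: tge)
        then show ?thesis using E3 by linarith
      next
        assume "i = 3"
        then have Y1: "1+t 3 4 \<ge> 18/13" using Y by simp
        have "51 < (2*(1+t 0 4))^3 + (2*(1+t 3 4))^3 + (2*(1+t 0 1))^3 + (2*(1+t 0 2))^3 + (2*(1+t 1 2))^3 + (2*(1+t 0 3))^3 + (2*(1+t 1 3))^3 + (2*(1+t 2 3))^3 + (2*(1+t 1 4))^3 + (2*(1+t 2 4))^3"
          using S by (intro L3[OF X Y1]) (simp_all add: tge)
        then show ?thesis using E3 by linarith
      qed
      then show False using Eb True by simp
    next
      case False
      then have k4: "k \<in> {4,5,6}" using assms(1) by auto
      have X': "(2*(1+t 0 4))^k \<ge> (36/13)^k" using X by (intro power_mono) auto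
      have Y': "(2*(1+t i 4))^k \<ge> (36/13)^k" using Y by (intro power_mono) auto
      have "energy k P \<ge> (2*(1+t 0 4))^k + (2*(1+t i 4))^k"
        using i Eexp nn by (elim insertE emptyE) simp_all
      then show False using X' Y' Eb L2[OF k4] by linarith
    qed
  qed
  have s0: "norm (stereo (P 0)) < 4"
    by (rule stereo_bound[OF un[of 0] A]) (simp_all add: power2_eq_square)
  have s1: "norm (stereo (P i)) < 3/2" if i: "i \<in> {1,2,3}" for i
  proof -
    have il: "i < 5" using i by auto
    show ?thesis by (rule stereo_bound[OF un[OF il] B[OF i]]) (simp_all add: power2_eq_square)
  qed
  show ?thesis using s0 s1 by blast
qed
end
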